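(* Let $\xi_m>0$, $\lambda>0$, $0\le\mu\le\xi_m$ and $T>0$. The equation $$\frac{\xi_m}{\lambda}=2T\ln\frac{\cosh(\sqrt{\xi_m^2+\Delta^2}/2T)}{\cosh(\sqrt{\mu^2+\Delta^2}/2T)}+\mu\int_0^{\mu}\tanh\Big(\frac{\sqrt{\xi^2+\Delta^2}}{2T}\Big)\frac{d\xi}{\sqrt{\xi^2+\Delta^2}}$$ has a positive solution $\Delta$ if and only if $$\frac{\xi_m}{\lambda}<2T\ln\frac{\cosh(\xi_m/2T)}{\cosh(\mu/2T)}+\mu\int_0^{\mu}\tanh\Big(\frac{\xi}{2T}\Big)\frac{d\xi}{\xi},$$ and if a positive solution exists it is unique. *)

theory Defs
  imports "HOL-Analysis.Analysis"
begin

definition gap_rhs :: "real \<Rightarrow> real \<Rightarrow> real \<Rightarrow> real \<Rightarrow> real" where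
  "gap_rhs xi_m mu T D =
     2 * T * ln (cosh (sqrt (xi_m\<^sup>2 + D\<^sup>2) / (2 * T)) / cosh (sqrt (mu\<^sup>2 + D\<^sup>2) / (2 * T)))
     + mu * integral {0..mu} (\<lambda>xi. tanh (sqrt (xi\<^sup>2 + D\<^sup>2) / (2 * T)) / sqrt (xi\<^sup>2 + D\<^sup>2))"

end

theory Submission
  imports Defs
begin

lemma cosh_gt1: "(u::real) \<noteq> 0 \<Longrightarrow> cosh u > 1"
proof -
  assume "u \<noteq> 0"
  have "cosh u = cosh (2*(u/2))" by simp
  also have "\<dots> = 1 + 2 * sinh (u/2)^2" by (simp only: cosh_double cosh_square_eq)
  finally show ?thesis using \<open>u \<noteq> 0\<close> by simp
qed

lemma sinh_gt: "(x::real) > 0 \<Longrightarrow> sinh x > x"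
proof -
  assume x: "x > 0"
  have "(\<lambda>u. sinh u - u) 0 < (\<lambda>u. sinh u - u) x"
  proof (rule DERIV_pos_imp_increasing_open[OF x])
    fix u :: real assume "0 < u" "u < x"
    then show "\<exists>y. ((\<lambda>u. sinh u - u) has_real_derivative y) (at u) \<and> 0 < y"
      by (intro exI[of _ "cosh u - 1"]) (auto intro!: derivative_eq_intros cosh_gt1)
  qed (intro continuous_intros)
  then show ?thesis by simp
qed

lemma tanh_lt: "(x::real) > 0 \<Longrightarrow> tanh x < x"
proof -
  assume x: "x > 0"
  have "(\<lambda>u. u - tanh u) 0 < (\<lambda>u. u - tanh u) x"
  proof (rule DERIV_pos_imp_increasing_open[OF x])
    fix u :: real assume "0 < u" "u < x"
    then show "\<exists>y. ((\<lambda>u. u - tanh u) has_real_derivative y) (at u) \<and> 0 < y"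
      by (intro exI[of _ "tanh u ^ 2"]) (auto intro!: derivative_eq_intros)
  qed (intro continuous_intros; simp)
  then show ?thesis by simp
qed

lemma tanh_div_decr: "0 < (a::real) \<Longrightarrow> a < b \<Longrightarrow> tanh b / b < tanh a / a"
proof -
  assume a: "0 < a" and ab: "a < b"
  have "(\<lambda>u. tanh u / u) a > (\<lambda>u. tanh u / u) b"
  proof (rule DERIV_neg_imp_decreasing_open[OF ab])
    fix u :: real assume u: "a < u" "u < b"
    then have u0: "u > 0" using a by simp
    have d: "((\<lambda>u. tanh u / u) has_real_derivative ((1 - tanh u ^ 2) * u - tanh u) / u^2) (at u)"
      using u0 by (auto intro!: derivative_eq_intros simp: field_simps power2_eq_square)
    have "2*u < sinh (2*u)" using sinh_gt u0 by simp
    then have "u < sinh u * cosh u" by (simp add: sinh_double)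
    then have "u / cosh u ^ 2 < sinh u / cosh u"
      by (simp add: field_simps power2_eq_square)
    moreover have "1 - tanh u ^ 2 = 1 / cosh u ^ 2"
      using hyperbolic_pythagoras[of u] by (simp add: tanh_def power_divide divide_simps)
    ultimately have "(1 - tanh u ^ 2) * u - tanh u < 0" by (simp add: tanh_def)
    then show "\<exists>y. ((\<lambda>u. tanh u / u) has_real_derivative y) (at u) \<and> y < 0"
      using d u0 by (intro exI[of _ "((1 - tanh u ^ 2) * u - tanh u) / u^2"]) (simp add: divide_neg_pos)
  qed (use a in \<open>intro continuous_intros; auto\<close>)
  then show ?thesis by simp
qed

definition G :: "real \<Rightarrow> real" where "G u = (if u = 0 then 1 else tanh u / u)"

lemma G_tendsto0: "((\<lambda>h. tanh h / h) \<longlongrightarrow> 1) (at (0::real))"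
proof -
  have "((\<lambda>x. tanh x) has_field_derivative 1) (at (0::real))"
    by (auto intro!: derivative_eq_intros)
  then show ?thesis by (simp add: DERIV_def)
qed

lemma G_isCont: "isCont G u"
proof (cases "u = 0")
  case True
  have "(G \<longlongrightarrow> 1) (at 0)"
    by (rule Lim_transform_eventually[OF G_tendsto0]) (auto simp: G_def eventually_at_filter)
  then show ?thesis using True by (simp add: isCont_def G_def)
next
  case False
  have "isCont (\<lambda>x. tanh x / x) u" using False by (intro continuous_intros) auto
  moreover have "\<forall>\<^sub>F x in nhds u. tanh x / x = G x"
    using t1_space_nhds[OF False] by eventually_elim (simp add: G_def)
  ultimately show ?thesis using isCont_cong[of "\<lambda>x. tanh x / x" G u] by simp
qed

lemma G_cont: "continuous_on A G"
  using G_isCont by (simp add: continuous_at_imp_continuous_on)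

lemma G_decr: "0 \<le> (a::real) \<Longrightarrow> a < b \<Longrightarrow> G b < G a"
  using tanh_div_decr[of a b] tanh_lt[of b] by (cases "a = 0") (auto simp: G_def)

definition kk :: "real \<Rightarrow> real \<Rightarrow> real" where "kk T s = G (s / (2*T)) / (2*T)"

lemma kk_eq: "T > 0 \<Longrightarrow> s \<noteq> 0 \<Longrightarrow> kk T s = tanh (s / (2*T)) / s"
  by (simp add: kk_def G_def)

lemma kk_decr: "T > 0 \<Longrightarrow> 0 \<le> (a::real) \<Longrightarrow> a < b \<Longrightarrow> kk T b < kk T a"
  unfolding kk_def using G_decr[of "a/(2*T)" "b/(2*T)"]
  by (simp add: divide_strict_right_mono)

lemma kk_mono: "T > 0 \<Longrightarrow> 0 \<le> (a::real) \<Longrightarrow> a \<le> b \<Longrightarrow> kk T b \<le> kk T a"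
  using kk_decr[of T a b] by (cases "a = b") auto

lemma kk_le: "T > 0 \<Longrightarrow> s > 0 \<Longrightarrow> kk T s \<le> 1 / s"
  using tanh_real_lt_1[of "s/(2*T)"] by (simp add: kk_eq divide_right_mono)

lemma kk_cont: "T > 0 \<Longrightarrow> continuous_on A (kk T)"
  unfolding kk_def by (intro continuous_intros continuous_on_compose2[OF G_cont[of UNIV]]) auto

lemma cosh_ne0: "cosh (x::real) \<noteq> 0" by (metis cosh_real_pos less_irrefl)

definition L :: "real \<Rightarrow> real \<Rightarrow> real \<Rightarrow> real" where
  "L T c D = ln (cosh (sqrt (c + D\<^sup>2) / (2 * T)))"

lemma L_deriv:
  assumes T: "T > 0" and c: "c \<ge> 0" and D: "D > 0"
  shows "(L T c has_real_derivative D * kk T (sqrt (c + D\<^sup>2)) / (2*T)) (at D)"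
proof -
  have s: "sqrt (c + D\<^sup>2) > 0" using c D by (simp add: add_nonneg_pos)
  have h1: "((\<lambda>D. sqrt (c + D\<^sup>2)/(2*T)) has_real_derivative D/(sqrt(c+D\<^sup>2)*(2*T))) (at D)"
    using s T by (auto intro!: derivative_eq_intros simp: field_simps power2_eq_square)
  have h2: "((\<lambda>D. cosh (sqrt (c + D\<^sup>2)/(2*T))) has_real_derivative sinh (sqrt (c + D\<^sup>2)/(2*T)) * (D/(sqrt(c+D\<^sup>2)*(2*T)))) (at D)"
    by (rule has_field_derivative_cosh[OF h1])
  note h3 = DERIV_chain2[OF DERIV_ln_divide[OF cosh_real_pos] h2]
  show ?thesis unfolding L_def
    using h3 s T by (simp add: kk_eq tanh_def field_simps)
qed

lemma L_cont: "T > 0 \<Longrightarrow> continuous_on A (L T c)"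
  unfolding L_def by (intro continuous_intros) (auto simp: cosh_ne0)

definition P :: "real \<Rightarrow> real \<Rightarrow> real \<Rightarrow> real \<Rightarrow> real" where
  "P xi_m mu T D = 2 * T * ln (cosh (sqrt (xi_m\<^sup>2 + D\<^sup>2) / (2 * T)) / cosh (sqrt (mu\<^sup>2 + D\<^sup>2) / (2 * T)))"

lemma P_eq: "P xi_m mu T D = 2 * T * (L T (xi_m\<^sup>2) D - L T (mu\<^sup>2) D)"
  unfolding P_def L_def by (simp add: ln_div)

lemma P_mono:
  assumes T: "T > 0" and mu: "0 \<le> mu" "mu \<le> xi_m" and D: "0 \<le> D1" "D1 < D2"
  shows "P xi_m mu T D2 \<le> P xi_m mu T D1" and "mu < xi_m \<Longrightarrow> P xi_m mu T D2 < P xi_m mu T D1"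
proof -
  define f where "f = (\<lambda>D. 2 * T * (L T (xi_m\<^sup>2) D - L T (mu\<^sup>2) D))"
  have cont: "continuous_on {D1..D2} f" unfolding f_def using T by (intro continuous_intros L_cont)
  have der: "(f has_real_derivative 2*T*(D * kk T (sqrt (xi_m\<^sup>2 + D\<^sup>2)) / (2*T) - D * kk T (sqrt (mu\<^sup>2 + D\<^sup>2)) / (2*T))) (at D)"
    if "D > 0" for D
    unfolding f_def using DERIV_cmult[OF DERIV_diff[OF L_deriv[OF T _ that] L_deriv[OF T _ that]], of "xi_m\<^sup>2" "mu\<^sup>2" "2*T"]
    by simp
  have eq: "2*T*(D * kk T (sqrt (xi_m\<^sup>2 + D\<^sup>2)) / (2*T) - D * kk T (sqrt (mu\<^sup>2 + D\<^sup>2)) / (2*T))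
     = D * (kk T (sqrt (xi_m\<^sup>2 + D\<^sup>2)) - kk T (sqrt (mu\<^sup>2 + D\<^sup>2)))" for D
    using T by (simp add: field_simps)
  have sq: "mu\<^sup>2 \<le> xi_m\<^sup>2" using mu by (simp add: power_mono)
  show "P xi_m mu T D2 \<le> P xi_m mu T D1"
  proof -
    have "f D2 \<le> f D1"
    proof (rule DERIV_nonpos_imp_decreasing_open[OF less_imp_le[OF D(2)] _ cont])
      fix D assume "D1 < D" "D < D2"
      then have "D > 0" using D by simp
      moreover have "kk T (sqrt (xi_m\<^sup>2 + D\<^sup>2)) \<le> kk T (sqrt (mu\<^sup>2 + D\<^sup>2))"
        using T sq by (intro kk_mono) auto
      ultimately show "\<exists>y. (f has_real_derivative y) (at D) \<and> y \<le> 0"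
        using der eq by (metis mult_nonneg_nonpos diff_le_0_iff_le less_imp_le)
    qed
    then show ?thesis by (simp add: P_eq f_def)
  qed
  assume lt: "mu < xi_m"
  then have sq': "mu\<^sup>2 < xi_m\<^sup>2" using mu by (simp add: power_strict_mono)
  have "f D2 < f D1"
  proof (rule DERIV_neg_imp_decreasing_open[OF D(2) _ cont])
    fix D assume "D1 < D" "D < D2"
    then have "D > 0" using D by simp
    moreover have "kk T (sqrt (xi_m\<^sup>2 + D\<^sup>2)) < kk T (sqrt (mu\<^sup>2 + D\<^sup>2))"
      using T sq' by (intro kk_decr) auto
    ultimately show "\<exists>y. (f has_real_derivative y) (at D) \<and> y < 0"
      using der eq by (metis mult_pos_neg diff_less_0_iff_less)
  qed
  then show "P xi_m mu T D2 < P xi_m mu T D1" by (simp add: P_eq f_def)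
qed

lemma P_cont: "T > 0 \<Longrightarrow> continuous_on A (P xi_m mu T)"
  unfolding P_eq[abs_def] by (intro continuous_intros L_cont)

definition Q :: "real \<Rightarrow> real \<Rightarrow> real \<Rightarrow> real" where
  "Q mu T D = integral {0..mu} (\<lambda>xi. kk T (sqrt (xi\<^sup>2 + D\<^sup>2)))"

lemma Q_decr:
  assumes T: "T > 0" and mu: "0 < mu" and D: "0 \<le> D1" "D1 < D2"
  shows "Q mu T D2 < Q mu T D1"
  unfolding Q_def
proof (rule integral_less_real)
  show "continuous_on {0..mu} (\<lambda>xi. kk T (sqrt (xi\<^sup>2 + D2\<^sup>2)))"
    using T by (intro continuous_on_compose2[OF kk_cont[of T UNIV]] continuous_intros) auto
  show "continuous_on {0..mu} (\<lambda>xi. kk T (sqrt (xi\<^sup>2 + D1\<^sup>2)))"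
    using T by (intro continuous_on_compose2[OF kk_cont[of T UNIV]] continuous_intros) auto
  show "{0<..<mu} \<noteq> {}" using mu by auto
  fix x assume "x \<in> {0<..<mu}"
  have "D1\<^sup>2 < D2\<^sup>2" using D by (simp add: power_strict_mono)
  then show "kk T (sqrt (x\<^sup>2 + D2\<^sup>2)) < kk T (sqrt (x\<^sup>2 + D1\<^sup>2))"
    using T by (intro kk_decr) auto
qed

lemma Q_cont:
  assumes T: "T > 0"
  shows "continuous_on U (Q mu T)"
proof -
  have "continuous_on U (\<lambda>D. integral (cbox 0 mu) (\<lambda>xi. kk T (sqrt (xi\<^sup>2 + D\<^sup>2))))"
    by (rule integral_continuous_on_param)
       (auto intro!: continuous_on_compose2[OF kk_cont[of T UNIV]] continuous_intros simp: T split_beta)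
  then show ?thesis unfolding Q_def[abs_def] by simp
qed

definition F :: "real \<Rightarrow> real \<Rightarrow> real \<Rightarrow> real \<Rightarrow> real" where
  "F xi_m mu T D = P xi_m mu T D + mu * Q mu T D"

lemma F_decr:
  assumes T: "T > 0" and mu: "0 \<le> mu" "mu \<le> xi_m" "0 < xi_m" and D: "0 \<le> D1" "D1 < D2"
  shows "F xi_m mu T D2 < F xi_m mu T D1"
proof (cases "mu = 0")
  case True
  then show ?thesis using P_mono(2)[OF T mu(1,2) D] mu by (simp add: F_def)
next
  case False
  then have "mu > 0" using mu by simp
  then have "mu * Q mu T D2 < mu * Q mu T D1" using Q_decr[OF T _ D] by simp
  then show ?thesis using P_mono(1)[OF T mu(1,2) D] by (simp add: F_def)
qed

lemma gap_eq:
  assumes T: "T > 0" and D: "D > 0"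
  shows "gap_rhs xi_m mu T D = F xi_m mu T D"
proof -
  have "integral {0..mu} (\<lambda>xi. tanh (sqrt (xi\<^sup>2 + D\<^sup>2) / (2 * T)) / sqrt (xi\<^sup>2 + D\<^sup>2))
      = Q mu T D"
    unfolding Q_def
  proof (rule integral_cong)
    fix xi :: real
    have "sqrt (xi\<^sup>2 + D\<^sup>2) \<noteq> 0" using D by (simp add: add_nonneg_pos)
    then show "tanh (sqrt (xi\<^sup>2 + D\<^sup>2) / (2 * T)) / sqrt (xi\<^sup>2 + D\<^sup>2) = kk T (sqrt (xi\<^sup>2 + D\<^sup>2))"
      using T by (simp add: kk_eq)
  qed
  then show ?thesis unfolding gap_rhs_def F_def P_def by simp
qed

lemma F0_eq:
  assumes T: "T > 0" and xm: "xi_m > 0" and mu: "mu \<ge> 0"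
  shows "F xi_m mu T 0 = 2 * T * ln (cosh (xi_m / (2 * T)) / cosh (mu / (2 * T)))
                         + mu * integral {0..mu} (\<lambda>xi. tanh (xi / (2 * T)) / xi)"
proof -
  have "Q mu T 0 = integral {0..mu} (\<lambda>xi. tanh (xi / (2 * T)) / xi)"
    unfolding Q_def
  proof (rule integral_spike[of "{0}"])
    fix xi assume "xi \<in> {0..mu} - {0}"
    then have "xi > 0" by auto
    then show "tanh (xi / (2 * T)) / xi = kk T (sqrt (xi\<^sup>2 + 0\<^sup>2))"
      using T by (simp add: kk_eq)
  qed auto
  then show ?thesis using xm mu unfolding F_def P_def by simp
qed

lemma lncosh_diff:
  assumes "0 \<le> y" "y \<le> (x::real)"
  shows "ln (cosh x) - ln (cosh y) \<le> x - y"
proof -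
  have e: "exp (-x) \<le> exp (x - 2*y)" using assms by simp
  have "cosh y * exp (x - y) = (exp x + exp (x - 2*y))/2"
    by (simp add: cosh_def field_simps flip: exp_add)
  then have "cosh x \<le> cosh y * exp (x - y)" using e by (simp add: cosh_def)
  then have "ln (cosh x) \<le> ln (cosh y * exp (x - y))" by simp
  also have "\<dots> = ln (cosh y) + (x - y)" by (simp add: ln_mult)
  finally show ?thesis by simp
qed

lemma F_bound:
  assumes T: "T > 0" and mu: "0 \<le> mu" "mu \<le> xi_m" and D: "D > 0"
  shows "F xi_m mu T D \<le> (xi_m\<^sup>2 + mu\<^sup>2) / D"
proof -
  define sa where "sa = sqrt (xi_m\<^sup>2 + D\<^sup>2)"
  define sb where "sb = sqrt (mu\<^sup>2 + D\<^sup>2)"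
  have sbD: "D \<le> sb" unfolding sb_def using D by (simp add: real_le_rsqrt)
  have "mu\<^sup>2 \<le> xi_m\<^sup>2" using mu by (simp add: power_mono)
  then have sab: "sb \<le> sa" unfolding sa_def sb_def by simp
  have "(D + xi_m\<^sup>2 / D)\<^sup>2 = D\<^sup>2 + 2 * xi_m\<^sup>2 + (xi_m\<^sup>2/D)\<^sup>2"
    using D by (simp add: power2_eq_square field_simps)
  also have "\<dots> \<ge> xi_m\<^sup>2 + D\<^sup>2" by simp
  finally have saD: "sa \<le> D + xi_m\<^sup>2 / D" unfolding sa_def using D
    by (intro real_le_lsqrt) auto
  have "P xi_m mu T D = 2 * T * (ln (cosh (sa / (2*T))) - ln (cosh (sb / (2*T))))"
    unfolding P_eq L_def sa_def sb_def by simp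
  also have "\<dots> \<le> 2 * T * (sa / (2*T) - sb / (2*T))"
    using T sab sbD D by (intro mult_left_mono lncosh_diff divide_right_mono) auto
  also have "\<dots> = sa - sb" using T by (simp add: field_simps)
  also have "\<dots> \<le> xi_m\<^sup>2 / D" using saD sbD by simp
  finally have Pb: "P xi_m mu T D \<le> xi_m\<^sup>2 / D" .
  have "Q mu T D \<le> integral {0..mu} (\<lambda>xi. 1 / D)"
    unfolding Q_def
  proof (rule integral_le)
    show "(\<lambda>xi. kk T (sqrt (xi\<^sup>2 + D\<^sup>2))) integrable_on {0..mu}"
      using T by (intro integrable_continuous_interval continuous_on_compose2[OF kk_cont[of T UNIV]] continuous_intros) auto
    fix xi :: real
    have s: "D \<le> sqrt (xi\<^sup>2 + D\<^sup>2)" using D by (simp add: real_le_rsqrt)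
    then have "kk T (sqrt (xi\<^sup>2 + D\<^sup>2)) \<le> 1 / sqrt (xi\<^sup>2 + D\<^sup>2)" using D T by (intro kk_le) (auto simp: add_nonneg_pos)
    also have "\<dots> \<le> 1 / D" using s D by (simp add: frac_le)
    finally show "kk T (sqrt (xi\<^sup>2 + D\<^sup>2)) \<le> 1 / D" .
  qed auto
  also have "\<dots> = mu / D" using mu by simp
  finally have "mu * Q mu T D \<le> mu * (mu / D)" using mu by (intro mult_left_mono)
  then show ?thesis using Pb unfolding F_def by (simp add: power2_eq_square add_divide_distrib)
qed

theorem mainTheorem6:
  fixes xi_m lam mu T :: real
  assumes "xi_m > 0" and "lam > 0" and "0 \<le> mu" and "mu \<le> xi_m" and "T > 0"
  shows "((\<exists>D>0. xi_m / lam = gap_rhs xi_m mu T D) \<longleftrightarrow>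
            xi_m / lam < 2 * T * ln (cosh (xi_m / (2 * T)) / cosh (mu / (2 * T)))
                         + mu * integral {0..mu} (\<lambda>xi. tanh (xi / (2 * T)) / xi))
         \<and> (\<forall>D1 D2. D1 > 0 \<longrightarrow> D2 > 0 \<longrightarrow> xi_m / lam = gap_rhs xi_m mu T D1
                    \<longrightarrow> xi_m / lam = gap_rhs xi_m mu T D2 \<longrightarrow> D1 = D2)"
proof -
  note xm = assms(1) and lam = assms(2) and mu = assms(3,4) and T = assms(5)
  define c where "c = xi_m / lam"
  have c: "c > 0" unfolding c_def using xm lam by simp
  define f where "f = F xi_m mu T"
  have decr: "f D2 < f D1" if "0 \<le> D1" "D1 < D2" for D1 D2
    unfolding f_def using F_decr[OF T mu xm that] .
  have f0: "f 0 = 2 * T * ln (cosh (xi_m / (2 * T)) / cosh (mu / (2 * T)))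
                         + mu * integral {0..mu} (\<lambda>xi. tanh (xi / (2 * T)) / xi)"
    unfolding f_def using F0_eq[OF T xm mu(1)] .
  have geq: "gap_rhs xi_m mu T D = f D" if "D > 0" for D
    unfolding f_def using gap_eq[OF T that] .
  have cont: "continuous_on A f" for A
    unfolding f_def F_def[abs_def] using T by (intro continuous_intros P_cont Q_cont)
  have part1: "(\<exists>D>0. c = gap_rhs xi_m mu T D) \<longleftrightarrow> c < f 0"
  proof
    assume "\<exists>D>0. c = gap_rhs xi_m mu T D"
    then obtain D where "D > 0" "c = f D" using geq by auto
    then show "c < f 0" using decr[of 0 D] by simp
  next
    assume lt: "c < f 0"
    define Db where "Db = 2 * (xi_m\<^sup>2 + mu\<^sup>2) / c"
    have Db: "Db > 0" unfolding Db_def using xm c by (simp add: add_pos_nonneg)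
    have "f Db \<le> (xi_m\<^sup>2 + mu\<^sup>2) / Db" unfolding f_def using F_bound[OF T mu Db] .
    also have "\<dots> = c / 2"
    proof -
      have "xi_m\<^sup>2 + mu\<^sup>2 > 0" using xm by (simp add: add_pos_nonneg)
      then show ?thesis unfolding Db_def using c by (simp add: field_simps)
    qed
    finally have "f Db < c" using c by simp
    then obtain x where x: "0 \<le> x" "x \<le> Db" "f x = c"
      using IVT2'[of f Db c 0] lt Db cont by auto
    then have "x \<noteq> 0" using lt by auto
    then show "\<exists>D>0. c = gap_rhs xi_m mu T D" using x geq by (intro exI[of _ x]) auto
  qed
  have part2: "D1 = D2" if "D1 > 0" "D2 > 0" "c = gap_rhs xi_m mu T D1" "c = gap_rhs xi_m mu T D2" for D1 D2
  proof -
    have "f D1 = f D2" using that geq by simp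
    then show ?thesis using decr[of D1 D2] decr[of D2 D1] that
      by (metis less_imp_le linorder_neqE_linordered_idom order_less_irrefl)
  qed
  show ?thesis using part1 part2 f0 unfolding c_def by auto
qed

end
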